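(* Let $q$ be a prime power and $n,k,l$ positive integers. The extreme points of the $l$-chain profile polytope of $k$-Sperner families of subspaces of $\mathbb{F}_q^n$ are the $l$-chain profile vectors of the families that are unions of at most $k$ full levels.
   Context: Level $i$ is the set of all $i$-dimensional subspaces of $\mathbb{F}_q^n$, $0\le i\le n$. A family $\mathcal{F}$ of subspaces is $k$-Sperner if it contains no chain $F_1\subsetneq F_2\subsetneq\dots\subsetneq F_{k+1}$ of $k+1$ members. The $l$-chain profile vector of a family $\mathcal{F}$ of subspaces is the vector in $\mathbb{R}^{\binom{n+1}{l}}$ whose coordinates are indexed by sets $\{i_1<i_2<\dots<i_l\}\subseteq\{0,\dots,n\}$, the coordinate for $\{i_1,\dots,i_l\}$ being the number of chains $F_1\subsetneq\dots\subsetneq F_l$ with $F_j\in\mathcal{F}$ and $\dim F_j=i_j$ for all $j$. The $l$-chain profile polytope of $k$-Sperner families is the convex hull of the $l$-chain profile vectors of all $k$-Sperner families of subspaces of $\mathbb{F}_q^n$. *)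

theory Defs
  imports "HOL-Analysis.Analysis" "HOL-Library.Function_Algebras"
begin

text \<open>Real-valued functions on an index type form a real vector space (pointwise
operations); this lets us use the library's convex hull and extreme points for
profile vectors, which are indexed by sets of levels.\<close>

instantiation "fun" :: (type, real_vector) real_vector
begin
definition scaleR_fun :: "real \<Rightarrow> ('a \<Rightarrow> 'b) \<Rightarrow> 'a \<Rightarrow> 'b"
  where "scaleR_fun r f = (\<lambda>x. r *\<^sub>R f x)"
instance
  by standard (auto simp: scaleR_fun_def fun_eq_iff scaleR_add_right scaleR_add_left)
end

text \<open>The ambient space is \<open>'a ^ 'n\<close> with \<open>'a\<close> a finite field (so \<open>q = CARD('a)\<close> is a prime
power) and \<open>n = CARD('n)\<close>.\<close>

definition level :: "nat \<Rightarrow> ('a::{finite,field} ^ 'n) set set" where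
  "level i = {S. vec.subspace S \<and> vec.dim S = i}"

definition all_subspaces :: "('a::{finite,field} ^ 'n) set set" where
  "all_subspaces = {S. vec.subspace S}"

definition is_chain_in :: "'v set set \<Rightarrow> 'v set list \<Rightarrow> bool" where
  "is_chain_in \<F> cs \<longleftrightarrow> set cs \<subseteq> \<F> \<and> sorted_wrt (\<subset>) cs"

definition k_sperner :: "nat \<Rightarrow> ('a::{finite,field} ^ 'n) set set \<Rightarrow> bool" where
  "k_sperner k \<F> \<longleftrightarrow> \<F> \<subseteq> all_subspaces \<and>
     \<not> (\<exists>cs. length cs = k + 1 \<and> is_chain_in \<F> cs)"

definition chain_profile :: "nat \<Rightarrow> ('a::{finite,field} ^ 'n) set set \<Rightarrow> nat set \<Rightarrow> real" where
  "chain_profile l \<F> = (\<lambda>I.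
     if I \<subseteq> {0..CARD('n)} \<and> card I = l
     then real (card {cs. length cs = l \<and> is_chain_in \<F> cs \<and>
                          map vec.dim cs = sorted_list_of_set I})
     else 0)"

definition chain_profile_polytope :: "'a::{finite,field} itself \<Rightarrow> 'n::finite itself \<Rightarrow> nat \<Rightarrow> nat \<Rightarrow> (nat set \<Rightarrow> real) set" where
  "chain_profile_polytope TYPE_a TYPE_n l k =
     convex hull {chain_profile l (\<F> :: ('a ^ 'n) set set) | \<F>. k_sperner k \<F>}"

end

theory Submission
  imports Defs
begin

lemma fun_sum_apply: "finite A \<Longrightarrow> (\<Sum>g\<in>A. f g) x = (\<Sum>g\<in>A. f g x)"
  by (induction A rule: finite_induct) auto

lemma fun_scaleR_apply: "(c *\<^sub>R f) x = c *\<^sub>R f x"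
  by (simp add: scaleR_fun_def)

lemma finite_chain_set: "finite {cs :: ('a::finite) set list. length cs = l \<and> P cs}"
proof -
  have "finite {cs :: 'a set list. set cs \<subseteq> UNIV \<and> length cs = l}"
    by (rule finite_lists_length_eq) simp
  then show ?thesis by (rule finite_subset[rotated]) auto
qed

lemma subspace_dim_strict:
  "vec.subspace A \<Longrightarrow> vec.subspace B \<Longrightarrow> A \<subset> B \<Longrightarrow> vec.dim A < vec.dim (B :: ('a::field^'n) set)"
  by (metis vec.dim_psubset vec.span_eq_iff)

lemma chain_dims_sorted:
  assumes "is_chain_in F cs" "F \<subseteq> (all_subspaces :: ('a::{finite,field}^'n) set set)"
  shows "sorted_wrt (<) (map vec.dim cs)"
proof -
  have "sorted_wrt (\<subset>) cs" "set cs \<subseteq> F" using assms(1) by (auto simp: is_chain_in_def)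
  have "sorted_wrt (\<lambda>x y. vec.dim x < vec.dim y) cs"
  proof (rule sorted_wrt_mono_rel[OF _ \<open>sorted_wrt (\<subset>) cs\<close>])
    fix x y assume "x \<in> set cs" "y \<in> set cs" "x \<subset> y"
    then show "vec.dim x < vec.dim y"
      using assms(2) \<open>set cs \<subseteq> F\<close> subspace_dim_strict[of x y] by (auto simp: all_subspaces_def)
  qed
  then show ?thesis by (simp add: sorted_wrt_map)
qed

lemma level_union_profile:
  assumes "I \<subseteq> {0..CARD('n)}"
  shows "chain_profile l (\<Union>i\<in>I. level i :: ('a::{finite,field}^'n) set set) J
       = (if J \<subseteq> I then chain_profile l (all_subspaces :: ('a^'n) set set) J else 0)"
proof (cases "J \<subseteq> {0..CARD('n)} \<and> card J = l")
  case False
  then show ?thesis unfolding chain_profile_def by auto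
next
  case True
  then have fJ: "finite J" using finite_subset by blast
  show ?thesis
  proof (cases "J \<subseteq> I")
    case JI: True
    have "{cs. length cs = l \<and> is_chain_in (\<Union>i\<in>I. level i :: ('a^'n) set set) cs \<and> map vec.dim cs = sorted_list_of_set J}
        = {cs. length cs = l \<and> is_chain_in (all_subspaces :: ('a^'n) set set) cs \<and> map vec.dim cs = sorted_list_of_set J}"
    proof (intro Collect_cong iffI)
      fix cs :: "('a^'n) set list"
      assume h: "length cs = l \<and> is_chain_in (all_subspaces :: ('a^'n) set set) cs \<and> map vec.dim cs = sorted_list_of_set J"
      have "set (map vec.dim cs) = J" using h fJ by simp
      then have "\<forall>x\<in>set cs. vec.dim x \<in> I" using JI by auto
      then show "length cs = l \<and> is_chain_in (\<Union>i\<in>I. level i :: ('a^'n) set set) cs \<and> map vec.dim cs = sorted_list_of_set J"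
        using h JI by (auto simp: is_chain_in_def level_def all_subspaces_def)
    qed (auto simp: is_chain_in_def level_def all_subspaces_def)
    then show ?thesis using JI True by (simp add: chain_profile_def)
  next
    case JI: False
    have "{cs. length cs = l \<and> is_chain_in (\<Union>i\<in>I. level i :: ('a^'n) set set) cs \<and> map vec.dim cs = sorted_list_of_set J} = {}"
    proof (rule ccontr)
      assume "\<not> ?thesis"
      then obtain cs :: "('a^'n) set list" where h: "is_chain_in (\<Union>i\<in>I. level i) cs" "map vec.dim cs = sorted_list_of_set J"
        by auto
      obtain j where j: "j \<in> J" "j \<notin> I" using JI by auto
      have "j \<in> set (map vec.dim cs)" using h(2) fJ j by simp
      then obtain c where "c \<in> set cs" "vec.dim c = j" by auto
      then show False using h(1) j by (auto simp: is_chain_in_def level_def)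
    qed
    note E = this
    show ?thesis unfolding chain_profile_def E using JI True by simp
  qed
qed

lemma level_union_sperner:
  assumes "I \<subseteq> {0..CARD('n)}" "card I \<le> k"
  shows "k_sperner k (\<Union>i\<in>I. level i :: ('a::{finite,field}^'n) set set)"
  unfolding k_sperner_def
proof (intro conjI notI)
  show "(\<Union>i\<in>I. level i :: ('a::{finite,field}^'n) set set) \<subseteq> all_subspaces"
    by (auto simp: level_def all_subspaces_def)
  then have sub: "(\<Union>i\<in>I. level i :: ('a::{finite,field}^'n) set set) \<subseteq> all_subspaces" .
  assume "\<exists>cs. length cs = k + 1 \<and> is_chain_in (\<Union>i\<in>I. level i :: ('a::{finite,field}^'n) set set) cs"
  then obtain cs where cs: "length cs = k + 1" "is_chain_in (\<Union>i\<in>I. level i :: ('a::{finite,field}^'n) set set) cs"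
    by auto
  have "sorted_wrt (<) (map vec.dim cs)" by (rule chain_dims_sorted[OF cs(2) sub])
  then have "distinct (map vec.dim cs)" by (simp add: strict_sorted_iff)
  then have "card (set (map vec.dim cs)) = length (map vec.dim cs)" by (rule distinct_card)
  then have "card (set (map vec.dim cs)) = k + 1" using cs(1) by simp
  moreover have "set (map vec.dim cs) \<subseteq> I" using cs(2) by (auto simp: is_chain_in_def level_def)
  moreover have "finite I" using assms(1) finite_subset by blast
  ultimately have "k + 1 \<le> card I" by (metis card_mono)
  then show False using assms(2) by simp
qed

lemma profile_bounds:
  assumes "F \<subseteq> (all_subspaces :: ('a::{finite,field}^'n) set set)"
  shows "0 \<le> chain_profile l F J \<and> chain_profile l F J \<le> chain_profile l (all_subspaces :: ('a^'n) set set) J"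
proof -
  have "card {cs. length cs = l \<and> is_chain_in F cs \<and> map vec.dim cs = sorted_list_of_set J}
     \<le> card {cs. length cs = l \<and> is_chain_in (all_subspaces :: ('a^'n) set set) cs \<and> map vec.dim cs = sorted_list_of_set J}"
    by (rule card_mono[OF finite_chain_set]) (use assms in \<open>auto simp: is_chain_in_def\<close>)
  then show ?thesis by (simp add: chain_profile_def)
qed

lemma adapted_basis_gen:
  fixes cs :: "('a::{finite,field}^'n) set list"
  assumes "sorted_wrt (\<subset>) cs" "\<forall>c\<in>set cs. vec.subspace c" "distinct ps"
    "vec.independent (set ps)" "\<forall>c\<in>set cs. set ps \<subseteq> c"
  shows "\<exists>bs. take (length ps) bs = ps \<and> distinct bs \<and> vec.independent (set bs) \<and>
     vec.span (set bs) = UNIV \<and> (\<forall>c\<in>set cs. vec.span (set (take (vec.dim c) bs)) = c)"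
  using assms
proof (induction cs arbitrary: ps)
  case Nil
  obtain B where B: "set ps \<subseteq> B" "vec.independent B" "UNIV \<subseteq> vec.span B"
    using vec.maximal_independent_subset_extend[of "set ps" UNIV] Nil.prems by auto
  obtain xs where xs: "set xs = B - set ps" "distinct xs"
    using finite_distinct_list[of "B - set ps"] by auto
  have "set (ps @ xs) = B" using xs B by auto
  moreover have "distinct (ps @ xs)" using xs Nil.prems by auto
  ultimately show ?case using B by (intro exI[of _ "ps @ xs"]) auto
next
  case (Cons c cs)
  have sc: "vec.subspace c" using Cons.prems by auto
  obtain B where B: "set ps \<subseteq> B" "B \<subseteq> c" "vec.independent B" "c \<subseteq> vec.span B"
    using vec.maximal_independent_subset_extend[of "set ps" c] Cons.prems by auto
  have spanB: "vec.span B = c" using vec.span_subspace[OF B(2) B(4) sc] .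
  obtain xs where xs: "set xs = B - set ps" "distinct xs"
    using finite_distinct_list[of "B - set ps"] by auto
  define ps' where "ps' = ps @ xs"
  have ps': "set ps' = B" "distinct ps'" using xs B Cons.prems by (auto simp: ps'_def)
  have "\<forall>c'\<in>set cs. set ps' \<subseteq> c'" using Cons.prems(1) B(2) ps'(1) by auto
  then obtain bs where bs: "take (length ps') bs = ps'" "distinct bs" "vec.independent (set bs)"
     "vec.span (set bs) = UNIV" "\<forall>c\<in>set cs. vec.span (set (take (vec.dim c) bs)) = c"
    using Cons.IH[of ps'] Cons.prems ps' B(3) by auto
  have "vec.dim c = vec.dim (vec.span B)" using spanB by simp
  also have "\<dots> = card B" by (rule vec.dim_span_eq_card_independent[OF B(3)])
  also have "card B = length ps'" using ps' distinct_card by metis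
  finally have dimc: "vec.dim c = length ps'" .
  have "take (length ps) bs = take (length ps) (take (length ps') bs)"
    by (simp add: ps'_def)
  also have "\<dots> = ps" using bs(1) by (simp add: ps'_def)
  finally have "take (length ps) bs = ps" .
  moreover have "vec.span (set (take (vec.dim c) bs)) = c" using dimc bs(1) ps'(1) spanB by simp
  ultimately show ?case using bs by auto
qed

lemma adapted_basis:
  fixes cs :: "('a::{finite,field}^'n) set list"
  assumes "sorted_wrt (\<subset>) cs" "\<forall>c\<in>set cs. vec.subspace c"
  obtains bs where "distinct bs" "vec.independent (set bs)" "vec.span (set bs) = UNIV"
     "\<forall>c\<in>set cs. vec.span (set (take (vec.dim c) bs)) = c" "length bs = CARD('n)"
proof -
  obtain bs where bs: "distinct bs" "vec.independent (set bs)" "vec.span (set bs) = UNIV"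
     "\<forall>c\<in>set cs. vec.span (set (take (vec.dim c) bs)) = c"
  proof -
    have "\<exists>bs. take (length []) bs = [] \<and> distinct bs \<and> vec.independent (set bs) \<and>
     vec.span (set bs) = UNIV \<and> (\<forall>c\<in>set cs. vec.span (set (take (vec.dim c) bs)) = c)"
      using adapted_basis_gen[OF assms, of "[]"] vec.independent_empty by simp
    then show ?thesis using that by auto
  qed
  have "vec.dim (vec.span (set bs)) = card (set bs)"
    by (rule vec.dim_span_eq_card_independent[OF bs(2)])
  then have "length bs = CARD('n)" using bs(1,3) by (simp add: distinct_card card_cart_basis)
  then show ?thesis using that bs by blast
qed

lemma chain_transitive:
  fixes cs cs' :: "('a::{finite,field}^'n) set list"
  assumes "sorted_wrt (\<subset>) cs" "\<forall>c\<in>set cs. vec.subspace c"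
    "sorted_wrt (\<subset>) cs'" "\<forall>c\<in>set cs'. vec.subspace c"
    "map vec.dim cs = map vec.dim cs'"
  shows "\<exists>h. Vector_Spaces.linear (*s) (*s) h \<and> bij h \<and> map ((`) h) cs = cs'"
proof -
  obtain bs where bs: "distinct bs" "vec.independent (set bs)" "vec.span (set bs) = UNIV"
     "\<forall>c\<in>set cs. vec.span (set (take (vec.dim c) bs)) = c" "length bs = CARD('n)"
    using adapted_basis[OF assms(1,2)] by blast
  obtain bs' where bs': "distinct bs'" "vec.independent (set bs')" "vec.span (set bs') = UNIV"
     "\<forall>c\<in>set cs'. vec.span (set (take (vec.dim c) bs')) = c" "length bs' = CARD('n)"
    using adapted_basis[OF assms(3,4)] by blast
  define f where "f x = bs' ! (THE i. i < length bs \<and> bs ! i = x)" for x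
  have fbs: "f (bs ! i) = bs' ! i" if "i < length bs" for i
  proof -
    have "(THE j. j < length bs \<and> bs ! j = bs ! i) = i"
      using that bs(1) by (auto simp: nth_eq_iff_index_eq)
    then show ?thesis by (simp add: f_def)
  qed
  obtain h where h: "Vector_Spaces.linear (*s) (*s) h" "\<forall>x\<in>set bs. h x = f x"
    using vec.linear_independent_extend[OF bs(2)] by blast
  have mh: "map h bs = bs'"
    by (rule nth_equalityI) (use bs(5) bs'(5) h(2) fbs in auto)
  have img: "h ` vec.span (set (take j bs)) = vec.span (set (take j bs'))" for j
  proof -
    have "h ` vec.span (set (take j bs)) = vec.span (h ` set (take j bs))"
      by (rule vec.linear_span_image[OF h(1), symmetric])
    also have "h ` set (take j bs) = set (take j bs')"
      by (metis mh set_map take_map)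
    finally show ?thesis .
  qed
  have "surj h" using img[of "length bs"] bs(3) bs'(3) bs(5) bs'(5) by simp
  moreover have "inj h" by (rule vec.linear_surjective_imp_injective[OF h(1) \<open>surj h\<close>]) simp
  moreover have "map ((`) h) cs = cs'"
  proof (rule nth_equalityI)
    show len: "length (map ((`) h) cs) = length cs'" using arg_cong[OF assms(5), of length] by simp
    fix t assume "t < length (map ((`) h) cs)"
    then have t: "t < length cs" "t < length cs'" using len by auto
    have d: "vec.dim (cs ! t) = vec.dim (cs' ! t)" using assms(5) t by (metis nth_map)
    have "h ` (cs ! t) = h ` vec.span (set (take (vec.dim (cs ! t)) bs))" using bs(4) t by simp
    also have "\<dots> = vec.span (set (take (vec.dim (cs' ! t)) bs'))" using img d by simp
    also have "\<dots> = cs' ! t" using bs'(4) t by simp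
    finally show "map ((`) h) cs ! t = cs' ! t" using t by simp
  qed
  ultimately show ?thesis using h(1) bij_def by blast
qed

lemma profile_in_hull:
  fixes F :: "('a::{finite,field}^'n) set set"
  assumes FS: "k_sperner k F"
  shows "chain_profile l F \<in> convex hull {chain_profile l \<F> | \<F> :: ('a ^ 'n) set set.
            \<exists>I. I \<subseteq> {0..CARD('n)} \<and> card I \<le> k \<and> \<F> = (\<Union>i\<in>I. level i)}"
    (is "_ \<in> convex hull ?R")
proof -
  define N where "N = CARD('n)"
  define G :: "(('a^'n) \<Rightarrow> ('a^'n)) set" where "G = {g. Vector_Spaces.linear (*s) (*s) g \<and> bij g}"
  have finG: "finite G" by simp
  have idG: "id \<in> G" by (simp add: G_def vec.linear_id)
  have Gpos: "card G > 0" using finG idG card_gt_0_iff by blast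
  have G_lin: "Vector_Spaces.linear (*s) (*s) g" and G_inj: "inj g" if "g \<in> G" for g
    using that by (auto simp: G_def bij_def)
  have Fsub: "F \<subseteq> all_subspaces" using FS by (simp add: k_sperner_def)
  obtain bs0 :: "('a^'n) list" where bs0: "distinct bs0" "vec.independent (set bs0)"
      "vec.span (set bs0) = UNIV" "length bs0 = N"
    using adapted_basis[of "[] :: ('a^'n) set list"] N_def by auto
  define E where "E j = vec.span (set (take j bs0))" for j
  have E_sub: "vec.subspace (E j)" for j by (simp add: E_def vec.subspace_span)
  have E_dim: "vec.dim (E j) = j" if "j \<le> N" for j
  proof -
    have "vec.independent (set (take j bs0))"
      using vec.independent_mono[OF bs0(2) set_take_subset] .
    then have "vec.dim (E j) = card (set (take j bs0))"
      unfolding E_def by (rule vec.dim_span_eq_card_independent)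
    also have "\<dots> = j" using bs0(1,4) that by (simp add: distinct_card)
    finally show ?thesis .
  qed
  have E_strict: "E i \<subset> E j" if "i < j" "j \<le> N" for i j
  proof -
    have "E i \<subseteq> E j" unfolding E_def
      by (rule vec.span_mono) (use that in \<open>simp add: set_take_subset_set_take\<close>)
    moreover have "E i \<noteq> E j" using E_dim that by (metis less_imp_le_nat order.strict_trans2 less_irrefl)
    ultimately show ?thesis by blast
  qed
  have gE_sub: "vec.subspace (g ` E j)" if "g \<in> G" for g j
    using vec.linear_subspace_image[OF G_lin[OF that] E_sub] .
  have gE_dim: "vec.dim (g ` E j) = j" if "g \<in> G" "j \<le> N" for g j
    using vec.dim_image_eq[OF G_lin[OF that(1)], of "E j"] G_inj[OF that(1)] E_dim[OF that(2)]
    by (simp add: inj_on_subset)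
  have gE_strict: "g ` E i \<subset> g ` E j" if "g \<in> G" "i < j" "j \<le> N" for g i j
    using E_strict[OF that(2,3)] G_inj[OF that(1)] by (metis image_mono inj_image_eq_iff psubset_eq)
  define D where "D H g = {i\<in>{0..N}. g ` E i \<in> H}" for H :: "('a^'n) set set" and g
  have D_sub: "D H g \<subseteq> {0..CARD('n)}" for H g by (auto simp: D_def N_def)
  have D_card: "card (D F g) \<le> k" if "g \<in> G" for g
  proof (rule ccontr)
    assume nk: "\<not> card (D F g) \<le> k"
    define ds where "ds = take (k+1) (sorted_list_of_set (D F g))"
    have fD: "finite (D F g)" using D_sub finite_subset by blast
    have lds: "length ds = k + 1" using nk fD by (simp add: ds_def)
    have sds: "sorted_wrt (<) ds" unfolding ds_def by (rule sorted_wrt_take) (rule strict_sorted_list_of_set)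
    have setds: "set ds \<subseteq> D F g" unfolding ds_def using fD by (metis set_take_subset set_sorted_list_of_set)
    define cs where "cs = map (\<lambda>i. g ` E i) ds"
    have "is_chain_in F cs" unfolding is_chain_in_def
    proof
      show "set cs \<subseteq> F" using setds by (auto simp: cs_def D_def)
      have "sorted_wrt (\<lambda>i j. g ` E i \<subset> g ` E j) ds"
      proof (rule sorted_wrt_mono_rel[OF _ sds])
        fix i j assume "i \<in> set ds" "j \<in> set ds" "i < j"
        then have "j \<le> N" using setds by (auto simp: D_def)
        then show "g ` E i \<subset> g ` E j" using gE_strict[OF that \<open>i < j\<close>] by blast
      qed
      then show "sorted_wrt (\<subset>) cs" by (simp add: cs_def sorted_wrt_map)
    qed
    moreover have "length cs = k + 1" using lds by (simp add: cs_def)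
    ultimately show False using FS by (auto simp: k_sperner_def)
  qed
  have key: "chain_profile l F J = (\<Sum>g\<in>G. (1 / real (card G)) * chain_profile l (\<Union>i\<in>D F g. level i :: ('a^'n) set set) J)" for J
  proof (cases "J \<subseteq> {0..CARD('n)} \<and> card J = l")
    case False
    then have nv: "(J \<subseteq> {0..CARD('n)} \<and> card J = l) = False" by simp
    have z: "chain_profile l H J = 0" for H :: "('a^'n) set set" unfolding chain_profile_def nv by simp
    show ?thesis by (simp add: z)
  next
    case True
    have fJ: "finite J" using True finite_subset by blast
    define js where "js = sorted_list_of_set J"
    have setjs: "set js = J" "length js = l" "sorted_wrt (<) js"
      using fJ True by (auto simp: js_def strict_sorted_list_of_set)
    have jsN: "\<forall>j\<in>set js. j \<le> N" using True setjs N_def by auto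
    define EJ where "EJ g = map (\<lambda>j. g ` E j) js" for g :: "('a^'n) \<Rightarrow> ('a^'n)"
    define Ch where "Ch H = {cs. length cs = l \<and> is_chain_in H cs \<and> map vec.dim cs = js}" for H :: "('a^'n) set set"
    have finCh: "finite (Ch H)" for H unfolding Ch_def by (rule finite_chain_set)
    have C1: "J \<subseteq> D H g \<longleftrightarrow> EJ g \<in> Ch H" if "g \<in> G" for H g
    proof
      assume "J \<subseteq> D H g"
      then have mem: "\<forall>j\<in>set js. g ` E j \<in> H" by (auto simp: D_def setjs)
      have "sorted_wrt (\<lambda>i j. g ` E i \<subset> g ` E j) js"
      proof (rule sorted_wrt_mono_rel[OF _ setjs(3)])
        fix i j assume "i \<in> set js" "j \<in> set js" "i < j"
        then have "j \<le> N" using jsN by auto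
        then show "g ` E i \<subset> g ` E j" using gE_strict[OF that \<open>i < j\<close>] by blast
      qed
      then have "sorted_wrt (\<subset>) (EJ g)" by (simp add: EJ_def sorted_wrt_map)
      moreover have "map vec.dim (EJ g) = js" using gE_dim that jsN by (auto simp: EJ_def intro!: map_idI)
      ultimately show "EJ g \<in> Ch H" using mem setjs by (auto simp: Ch_def is_chain_in_def EJ_def)
    next
      assume "EJ g \<in> Ch H"
      then have "set (EJ g) \<subseteq> H" by (simp add: Ch_def is_chain_in_def)
      then show "J \<subseteq> D H g" using jsN setjs by (auto simp: EJ_def D_def)
    qed
    have ChA: "Ch H \<subseteq> Ch all_subspaces" if "H \<subseteq> all_subspaces" for H
      using that by (auto simp: Ch_def is_chain_in_def)
    have chainAll: "sorted_wrt (\<subset>) c \<and> (\<forall>x\<in>set c. vec.subspace x)" if "c \<in> Ch all_subspaces" for c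
      using that by (auto simp: Ch_def is_chain_in_def all_subspaces_def)
    have C2le: "card {g\<in>G. EJ g = c} \<le> card {g\<in>G. EJ g = c'}"
      if cin: "c \<in> Ch all_subspaces" "c' \<in> Ch all_subspaces" for c c'
    proof -
      obtain h where h: "Vector_Spaces.linear (*s) (*s) h" "bij h" "map ((`) h) c = c'"
        using chain_transitive[of c c'] chainAll[OF cin(1)] chainAll[OF cin(2)] cin
        by (auto simp: Ch_def)
      have "inj_on (\<lambda>g. h \<circ> g) {g\<in>G. EJ g = c}"
      proof (rule inj_onI)
        fix g1 g2 assume eq: "h \<circ> g1 = h \<circ> g2"
        have "g1 x = g2 x" for x using fun_cong[OF eq, of x] bij_is_inj[OF h(2)]
          by (simp add: inj_eq)
        then show "g1 = g2" by (rule ext)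
      qed
      moreover have "(\<lambda>g. h \<circ> g) ` {g\<in>G. EJ g = c} \<subseteq> {g\<in>G. EJ g = c'}"
      proof (rule image_subsetI)
        fix g assume "g \<in> {g\<in>G. EJ g = c}"
        then have g: "g \<in> G" "EJ g = c" by auto
        have "Vector_Spaces.linear (*s) (*s) (h \<circ> g)"
          by (rule Vector_Spaces.linear_compose[OF G_lin[OF g(1)] h(1)])
        moreover have "bij (h \<circ> g)" using g(1) h(2) by (simp add: G_def bij_comp)
        ultimately have hg: "h \<circ> g \<in> G" by (simp add: G_def)
        have "EJ (h \<circ> g) = map ((`) h) (EJ g)" by (simp add: EJ_def image_comp)
        then have "EJ (h \<circ> g) = c'" using g h(3) by simp
        then show "h \<circ> g \<in> {g\<in>G. EJ g = c'}" using hg by simp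
      qed
      ultimately show ?thesis by (rule card_inj_on_le) (simp add: finG)
    qed
    define s where "s = card {g\<in>G. EJ g = EJ id}"
    have "J \<subseteq> D all_subspaces id" using jsN setjs E_sub by (auto simp: D_def all_subspaces_def)
    then have idCh: "EJ id \<in> Ch all_subspaces" using C1[OF idG] by blast
    have C2: "card {g\<in>G. EJ g = c} = s" if "c \<in> Ch all_subspaces" for c
      using C2le[OF that idCh] C2le[OF idCh that] s_def by simp
    have C3: "card {g\<in>G. J \<subseteq> D H g} = card (Ch H) * s" if "H \<subseteq> all_subspaces" for H
    proof -
      have eq: "{g\<in>G. J \<subseteq> D H g} = (\<Union>c\<in>Ch H. {g\<in>G. EJ g = c})" using C1 by auto
      have "card (\<Union>c\<in>Ch H. {g\<in>G. EJ g = c}) = (\<Sum>c\<in>Ch H. card {g\<in>G. EJ g = c})"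
        using finCh[of H] finG by (intro card_UN_disjoint) auto
      also have "\<dots> = (\<Sum>c\<in>Ch H. s)" using C2 ChA[OF that] by (intro sum.cong) auto
      finally show ?thesis using eq by simp
    qed
    have C4: "{g\<in>G. J \<subseteq> D all_subspaces g} = G"
      using jsN setjs gE_sub by (auto simp: D_def all_subspaces_def)
    have GA: "card G = card (Ch all_subspaces) * s" using C3[of all_subspaces] C4 by simp
    have profF: "chain_profile l F J = real (card (Ch F))"
      using True by (simp add: chain_profile_def Ch_def js_def)
    have profAll: "chain_profile l (all_subspaces :: ('a^'n) set set) J = real (card (Ch all_subspaces))"
      using True by (simp add: chain_profile_def Ch_def js_def)
    have "(\<Sum>g\<in>G. (1 / real (card G)) * chain_profile l (\<Union>i\<in>D F g. level i :: ('a^'n) set set) J)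
        = (\<Sum>g\<in>G. if J \<subseteq> D F g then 1 / real (card G) * real (card (Ch all_subspaces)) else 0)"
    proof (rule sum.cong[OF refl])
      fix g
      have LU: "chain_profile l (\<Union>i\<in>D F g. level i :: ('a^'n) set set) J
          = (if J \<subseteq> D F g then chain_profile l (all_subspaces :: ('a^'n) set set) J else 0)"
        by (rule level_union_profile[OF D_sub])
      show "(1 / real (card G)) * chain_profile l (\<Union>i\<in>D F g. level i :: ('a^'n) set set) J
          = (if J \<subseteq> D F g then 1 / real (card G) * real (card (Ch all_subspaces)) else 0)"
        unfolding LU profAll by simp
    qed
    also have "\<dots> = (\<Sum>g\<in>{g\<in>G. J \<subseteq> D F g}. 1 / real (card G) * real (card (Ch all_subspaces)))"
      by (simp only: sum.inter_filter[OF finG])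
    also have "\<dots> = real (card {g\<in>G. J \<subseteq> D F g}) * (1 / real (card G) * real (card (Ch all_subspaces)))"
      by simp
    also have "\<dots> = real (card (Ch F) * s) * real (card (Ch all_subspaces)) / real (card (Ch all_subspaces) * s)"
      using C3[OF Fsub] GA by simp
    also have "\<dots> = real (card (Ch F))" using GA Gpos by simp
    finally show ?thesis using profF by simp
  qed
  then have "chain_profile l F = (\<Sum>g\<in>G. (1 / real (card G)) *\<^sub>R chain_profile l (\<Union>i\<in>D F g. level i :: ('a^'n) set set))"
    by (simp add: fun_eq_iff fun_sum_apply finG fun_scaleR_apply)
  also have "\<dots> \<in> convex hull ?R"
  proof (rule convex_sum[OF finG convex_convex_hull])
    show "(\<Sum>i\<in>G. 1 / real (card G)) = 1" using Gpos idG by auto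
    show "0 \<le> 1 / real (card G)" for i by simp
    fix g assume "g \<in> G"
    then have "chain_profile l (\<Union>i\<in>D F g. level i :: ('a^'n) set set) \<in> ?R"
      using D_sub D_card by blast
    then show "chain_profile l (\<Union>i\<in>D F g. level i :: ('a^'n) set set) \<in> convex hull ?R"
      by (rule hull_inc)
  qed
  finally show ?thesis .
qed

lemma seg_real:
  fixes u a b f x :: real
  assumes "0 < u" "u < 1" "0 \<le> a" "a \<le> f" "0 \<le> b" "b \<le> f" "x = 0 \<or> x = f"
    "x = (1 - u) * a + u * b"
  shows "a = b"
proof -
  have p1: "0 \<le> (1 - u) * a" "0 \<le> u * b" using assms by simp_all
  have p2: "0 \<le> (1 - u) * (f - a)" "0 \<le> u * (f - b)" using assms by simp_all
  show ?thesis
  proof (cases "x = 0")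
    case True
    then have "(1 - u) * a = 0" "u * b = 0" using p1 assms(8) by linarith+
    then show ?thesis using assms(1,2) by simp
  next
    case False
    then have "x = f" using assms(7) by simp
    have sm: "(1 - u) * (f - a) + u * (f - b) = f - x" using assms(8) by (simp add: algebra_simps)
    then have "(1 - u) * (f - a) = 0" "u * (f - b) = 0" using p2 \<open>x = f\<close> by linarith+
    then have "f - a = 0" "f - b = 0" using assms(1,2) by simp_all
    then show ?thesis by simp
  qed
qed

theorem corollary4p2:
  fixes k l :: nat
  assumes "k \<ge> 1" and "l \<ge> 1"
  shows "{x. x extreme_point_of chain_profile_polytope TYPE('a::{finite,field}) TYPE('n) l k}
       = {chain_profile l \<F> | \<F> :: ('a ^ 'n) set set.
            \<exists>I. I \<subseteq> {0..CARD('n)} \<and> card I \<le> k \<and> \<F> = (\<Union>i\<in>I. level i)}"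
    (is "?L = ?R")
proof -
  let ?P = "{chain_profile l (\<F> :: ('a ^ 'n) set set) | \<F>. k_sperner k \<F>}"
  let ?f = "chain_profile l (all_subspaces :: ('a^'n) set set)"
  have RP: "?R \<subseteq> ?P"
  proof
    fix x assume "x \<in> ?R"
    then obtain I where I: "I \<subseteq> {0..CARD('n)}" "card I \<le> k"
        "x = chain_profile l (\<Union>i\<in>I. level i :: ('a^'n) set set)" by blast
    then show "x \<in> ?P" using level_union_sperner[OF I(1,2)] by blast
  qed
  have PH: "?P \<subseteq> convex hull ?R"
  proof
    fix x assume "x \<in> ?P"
    then obtain F :: "('a^'n) set set" where "k_sperner k F" "x = chain_profile l F" by blast
    then show "x \<in> convex hull ?R" using profile_in_hull[of k F l] by simp
  qed
  have hull_eq: "chain_profile_polytope TYPE('a) TYPE('n) l k = convex hull ?R"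
    unfolding chain_profile_polytope_def
  proof (rule antisym)
    show "convex hull ?P \<subseteq> convex hull ?R" by (rule hull_minimal[OF PH]) (rule convex_convex_hull)
    show "convex hull ?R \<subseteq> convex hull ?P" by (rule hull_mono[OF RP])
  qed
  have box: "chain_profile_polytope TYPE('a) TYPE('n) l k \<subseteq> {y. \<forall>J. 0 \<le> y J \<and> y J \<le> ?f J}"
    unfolding chain_profile_polytope_def
  proof (rule hull_minimal)
    show "?P \<subseteq> {y. \<forall>J. 0 \<le> y J \<and> y J \<le> ?f J}"
    proof
      fix x assume "x \<in> ?P"
      then obtain F :: "('a^'n) set set" where F: "k_sperner k F" "x = chain_profile l F" by blast
      then have "F \<subseteq> all_subspaces" by (simp add: k_sperner_def)
      then show "x \<in> {y. \<forall>J. 0 \<le> y J \<and> y J \<le> ?f J}" using profile_bounds F(2) by blast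
    qed
    show "convex {y. \<forall>J. 0 \<le> y J \<and> y J \<le> ?f J}"
      unfolding convex_def
    proof (intro ballI allI impI CollectI)
      fix x y :: "nat set \<Rightarrow> real" and u v :: real and J
      assume h: "x \<in> {y. \<forall>J. 0 \<le> y J \<and> y J \<le> ?f J}" "y \<in> {y. \<forall>J. 0 \<le> y J \<and> y J \<le> ?f J}"
        "0 \<le> u" "0 \<le> v" "u + v = 1"
      have a: "0 \<le> x J" "x J \<le> ?f J" "0 \<le> y J" "y J \<le> ?f J" using h(1,2) by auto
      have "u * x J \<le> u * ?f J" "v * y J \<le> v * ?f J" using a h(3,4) by (simp_all add: mult_left_mono)
      moreover have "0 \<le> u * x J" "0 \<le> v * y J" using a h(3,4) by simp_all
      moreover have "u * ?f J + v * ?f J = ?f J" using h(5) by (metis distrib_right mult_1)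
      ultimately show "0 \<le> (u *\<^sub>R x + v *\<^sub>R y) J \<and> (u *\<^sub>R x + v *\<^sub>R y) J \<le> ?f J"
        by (simp add: fun_scaleR_apply)
    qed
  qed
  show ?thesis
  proof (rule antisym)
    show "?L \<subseteq> ?R"
    proof
      fix x assume "x \<in> ?L"
      then have "x extreme_point_of convex hull ?R" using hull_eq by simp
      then show "x \<in> ?R" by (rule extreme_point_of_convex_hull)
    qed
    show "?R \<subseteq> ?L"
    proof
      fix x assume "x \<in> ?R"
      then obtain I where I: "I \<subseteq> {0..CARD('n)}" "card I \<le> k"
        "x = chain_profile l (\<Union>i\<in>I. level i :: ('a^'n) set set)" by blast
      have xJ: "x J = 0 \<or> x J = ?f J" for J
      proof -
        have LU: "chain_profile l (\<Union>i\<in>I. level i :: ('a^'n) set set) J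
          = (if J \<subseteq> I then ?f J else 0)"
          by (rule level_union_profile[OF I(1)])
        show ?thesis unfolding I(3) LU by simp
      qed
      have xin: "x \<in> chain_profile_polytope TYPE('a) TYPE('n) l k"
        unfolding hull_eq by (rule hull_inc) (use \<open>x \<in> ?R\<close> in simp)
      have "x \<notin> open_segment a b" if ab: "a \<in> chain_profile_polytope TYPE('a) TYPE('n) l k"
        "b \<in> chain_profile_polytope TYPE('a) TYPE('n) l k" for a b
      proof
        assume "x \<in> open_segment a b"
        then obtain u where u: "a \<noteq> b" "0 < u" "u < 1" "x = (1 - u) *\<^sub>R a + u *\<^sub>R b"
          by (auto simp: in_segment)
        have "a J = b J" for J
        proof (rule seg_real[OF u(2,3)])
          show "0 \<le> a J" "a J \<le> ?f J" "0 \<le> b J" "b J \<le> ?f J" using ab box by blast+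
          show "x J = 0 \<or> x J = ?f J" by (rule xJ)
          show "x J = (1 - u) * a J + u * b J" using u(4) by (simp add: fun_scaleR_apply)
        qed
        then show False using u(1) by (simp add: fun_eq_iff)
      qed
      then show "x \<in> ?L" using xin by (simp add: extreme_point_of_def)
    qed
  qed
qed

end
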